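(* Let $\{X_t\}_{t\ge0}$ be a real-valued symmetric Lévy process with transition densities $p_t$ and semigroup $(P_tf)(x)=\int_{\mathbf{R}}p_t(y-x)f(y)\,dy$, and let $u_0:\mathbf{R}\to\mathbf{R}_+$ be bounded measurable. Let $\vartheta:\mathbf{R}\to\mathbf{R}_+$ be a weight. Then for all $\beta>0$ and all even integers $\nu\ge2$, $$\mathcal{N}_{\beta,\nu,\vartheta}(P_\bullet u_0)\le\mathcal{N}_{\beta,\nu,\vartheta}(u_0)\cdot\sup_{t\ge0}\big(e^{-\beta t}\,\mathrm{E}\,\vartheta(X_t)\big)^{1/2}.$$ In particular, if $\mathrm{E}e^{cX_1}<\infty$ for some $c\in\mathbf{R}$ and $\vartheta_c(x):=e^{cx}$, then for all $\beta>\ln\mathrm{E}e^{cX_1}$, $\mathcal{N}_{\beta,\nu,\vartheta_c}(P_\bullet u_0)\le\mathcal{N}_{\beta,\nu,\vartheta_c}(u_0)$.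
   Context: A weight is a measurable $\vartheta:\mathbf{R}\to\mathbf{R}_+$ with $\vartheta(a+b)\le\vartheta(a)\vartheta(b)$ for all $a,b\in\mathbf{R}$. For a (possibly random, possibly time-dependent) field $v$, $\mathcal{N}_{\beta,\nu,\vartheta}(v):=\big[\sup_{t\ge0}\sup_{x\in\mathbf{R}}e^{-\beta t}\vartheta(x)\|v_t(x)\|_\nu^2\big]^{1/2}$, with $\|Y\|_\nu:=(\mathrm{E}|Y|^\nu)^{1/\nu}$; $u_0$ is regarded as the time-independent field $(t,x)\mapsto u_0(x)$, and $P_\bullet u_0$ denotes the field $(t,x)\mapsto(P_tu_0)(x)$. *)

theory Defs
  imports "HOL-Probability.Probability"
begin

definition levy_process :: "'a measure \<Rightarrow> (real \<Rightarrow> 'a \<Rightarrow> real) \<Rightarrow> bool" where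
  "levy_process M X \<longleftrightarrow>
     prob_space M \<and>
     (\<forall>t\<ge>0. X t \<in> borel_measurable M) \<and>
     (AE \<omega> in M. X 0 \<omega> = 0) \<and>
     (\<forall>ts::real list. \<forall>n. length ts = Suc n \<longrightarrow> sorted ts \<longrightarrow> (\<forall>s\<in>set ts. 0 \<le> s) \<longrightarrow>
        prob_space.indep_vars M (\<lambda>_. borel) (\<lambda>i \<omega>. X (ts ! Suc i) \<omega> - X (ts ! i) \<omega>) {..<n}) \<and>
     (\<forall>s\<ge>0. \<forall>t\<ge>0. distr M borel (\<lambda>\<omega>. X (s + t) \<omega> - X s \<omega>) = distr M borel (X t)) \<and>
     (\<forall>\<epsilon>>0. ((\<lambda>t. measure M {\<omega>\<in>space M. \<epsilon> < \<bar>X t \<omega>\<bar>}) \<longlongrightarrow> 0) (at_right 0)) \<and>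
     (AE \<omega> in M. \<forall>t\<ge>0. continuous (at_right t) (\<lambda>s. X s \<omega>) \<and>
                        (0 < t \<longrightarrow> (\<exists>l. ((\<lambda>s. X s \<omega>) \<longlongrightarrow> l) (at_left t))))"

definition symmetric_levy_with_densities ::
  "'a measure \<Rightarrow> (real \<Rightarrow> 'a \<Rightarrow> real) \<Rightarrow> (real \<Rightarrow> real \<Rightarrow> real) \<Rightarrow> bool" where
  "symmetric_levy_with_densities M X p \<longleftrightarrow>
     levy_process M X \<and>
     (\<forall>t\<ge>0. distr M borel (\<lambda>\<omega>. - X t \<omega>) = distr M borel (X t)) \<and>
     (\<forall>t>0. (\<forall>x. 0 \<le> p t x) \<and> distributed M lborel (X t) (\<lambda>x. ennreal (p t x)))"

definition levy_semigroup :: "(real \<Rightarrow> real \<Rightarrow> real) \<Rightarrow> real \<Rightarrow> (real \<Rightarrow> real) \<Rightarrow> real \<Rightarrow> real" where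
  "levy_semigroup p t f x = (if t = 0 then f x else \<integral>y. p t (y - x) * f y \<partial>lborel)"

definition weight :: "(real \<Rightarrow> real) \<Rightarrow> bool" where
  "weight \<theta> \<longleftrightarrow> \<theta> \<in> borel_measurable borel \<and> (\<forall>x. 0 \<le> \<theta> x) \<and>
     (\<forall>a b. \<theta> (a + b) \<le> \<theta> a * \<theta> b)"

definition Lnorm :: "'a measure \<Rightarrow> nat \<Rightarrow> ('a \<Rightarrow> real) \<Rightarrow> real" where
  "Lnorm M \<nu> Y = (\<integral>\<omega>. \<bar>Y \<omega>\<bar> ^ \<nu> \<partial>M) powr (1 / real \<nu>)"

definition ennreal_sqrt :: "ennreal \<Rightarrow> ennreal" where
  "ennreal_sqrt z = (if z = \<infinity> then \<infinity> else ennreal (sqrt (enn2real z)))"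

definition Nnorm :: "'a measure \<Rightarrow> real \<Rightarrow> nat \<Rightarrow> (real \<Rightarrow> real) \<Rightarrow> (real \<Rightarrow> real \<Rightarrow> 'a \<Rightarrow> real) \<Rightarrow> ennreal" where
  "Nnorm M \<beta> \<nu> \<theta> v = ennreal_sqrt
     (SUP t\<in>{0..}. SUP x. ennreal (exp (- \<beta> * t) * \<theta> x * (Lnorm M \<nu> (v t x))\<^sup>2))"

end

theory Submission
  imports Defs
begin


lemma ennreal_sqrt_mono: "a \<le> b \<Longrightarrow> ennreal_sqrt a \<le> ennreal_sqrt b"
  unfolding ennreal_sqrt_def
  by (cases a; cases b) (auto simp: enn2real_ennreal top_unique)

lemma ennreal_sqrt_ennreal: "0 \<le> r \<Longrightarrow> ennreal_sqrt (ennreal r) = ennreal (sqrt r)"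
  unfolding ennreal_sqrt_def by simp

lemma ennreal_sqrt_zero: "ennreal_sqrt 0 = 0"
  unfolding ennreal_sqrt_def by simp

lemma ennreal_sqrt_top: "ennreal_sqrt top = top"
  unfolding ennreal_sqrt_def by simp

lemma ennreal_sqrt_mult_top: "ennreal_sqrt (a * top) = ennreal_sqrt a * top"
proof (cases a)
  case (real r)
  show ?thesis
  proof (cases "r = 0")
    case True then show ?thesis using real by (simp add: ennreal_sqrt_zero)
  next
    case False
    then have "0 < r" using real by simp
    then have "ennreal r * top = top" "ennreal (sqrt r) * top = top"
      by (simp_all add: ennreal_mult_top)
    then show ?thesis using real \<open>0 < r\<close> by (simp add: ennreal_sqrt_ennreal ennreal_sqrt_top)
  qed
next
  case top then show ?thesis by (simp add: ennreal_sqrt_top)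
qed

lemma ennreal_sqrt_mult: "ennreal_sqrt (a * b) = ennreal_sqrt a * ennreal_sqrt b"
proof (cases b)
  case (real s)
  show ?thesis
  proof (cases a)
    case (real r)
    then have "ennreal_sqrt (a * b) = ennreal_sqrt (ennreal (r * s))"
      using \<open>b = ennreal s\<close> \<open>0 \<le> s\<close> by (simp add: ennreal_mult)
    also have "\<dots> = ennreal (sqrt r * sqrt s)"
      using real \<open>0 \<le> s\<close> by (simp add: ennreal_sqrt_ennreal real_sqrt_mult)
    also have "\<dots> = ennreal_sqrt a * ennreal_sqrt b"
      using real \<open>b = ennreal s\<close> \<open>0 \<le> s\<close> by (simp add: ennreal_sqrt_ennreal ennreal_mult)
    finally show ?thesis .
  next
    case top
    then show ?thesis using ennreal_sqrt_mult_top[of b] by (simp add: mult.commute ennreal_sqrt_top)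
  qed
next
  case top
  then show ?thesis using ennreal_sqrt_mult_top[of a] by (simp add: ennreal_sqrt_top)
qed

lemma ennreal_sqrt_le1: "a \<le> 1 \<Longrightarrow> ennreal_sqrt a \<le> 1"
  using ennreal_sqrt_mono[of a 1] by (simp add: ennreal_sqrt_def)

lemma Lnorm_const:
  assumes "prob_space M" "0 < \<nu>"
  shows "Lnorm M \<nu> (\<lambda>\<omega>. c) = \<bar>c\<bar>"
proof -
  interpret prob_space M by fact
  have "Lnorm M \<nu> (\<lambda>\<omega>. c) = (\<bar>c\<bar> ^ \<nu>) powr (1 / real \<nu>)"
    unfolding Lnorm_def by (simp add: prob_space)
  also have "\<dots> = \<bar>c\<bar>"
  proof (cases "c = 0")
    case True then show ?thesis using assms by simp
  next
    case False
    then have "(\<bar>c\<bar> ^ \<nu>) powr (1 / real \<nu>) = (\<bar>c\<bar> powr real \<nu>) powr (1 / real \<nu>)"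
      by (simp add: powr_realpow)
    also have "\<dots> = \<bar>c\<bar>" using assms by (simp add: powr_powr)
    finally show ?thesis .
  qed
  finally show ?thesis .
qed



lemma levy_prob: "symmetric_levy_with_densities M X p \<Longrightarrow> prob_space M"
  by (simp add: symmetric_levy_with_densities_def levy_process_def)

lemma levy_meas: "symmetric_levy_with_densities M X p \<Longrightarrow> 0 \<le> t \<Longrightarrow> X t \<in> borel_measurable M"
  by (simp add: symmetric_levy_with_densities_def levy_process_def)

lemma levy_X0: "symmetric_levy_with_densities M X p \<Longrightarrow> AE \<omega> in M. X 0 \<omega> = 0"
  by (simp add: symmetric_levy_with_densities_def levy_process_def)

lemma meas_comp:
  assumes levy: "symmetric_levy_with_densities M X p"
    and f: "f \<in> borel_measurable borel" and t: "0 \<le> t"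
  shows "(\<lambda>\<omega>. f (x + X t \<omega>)) \<in> borel_measurable M"
proof -
  have [measurable]: "X t \<in> borel_measurable M" using levy_meas[OF levy t] .
  show ?thesis by (rule measurable_compose[OF _ f]) simp
qed

lemma SG:
  assumes levy: "symmetric_levy_with_densities M X p"
    and u0_meas: "u0 \<in> borel_measurable borel"
    and t: "0 \<le> t"
  shows "levy_semigroup p t u0 x = (\<integral>\<omega>. u0 (x + X t \<omega>) \<partial>M)"
proof (cases "t = 0")
  case True
  interpret prob_space M using levy_prob[OF levy] .
  have "(\<integral>\<omega>. u0 (x + X t \<omega>) \<partial>M) = (\<integral>\<omega>. u0 x \<partial>M)"
    using levy_X0[OF levy] True by (intro integral_cong_AE) (auto intro: meas_comp[OF levy u0_meas])
  also have "\<dots> = u0 x" by (simp add: prob_space)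
  finally show ?thesis using True by (simp add: levy_semigroup_def)
next
  case False
  with t have tp: "0 < t" by simp
  have d: "distributed M lborel (X t) (\<lambda>x. ennreal (p t x))" and pn: "\<forall>x. 0 \<le> p t x"
    using levy tp by (auto simp: symmetric_levy_with_densities_def)
  have "levy_semigroup p t u0 x = (\<integral>y. p t (y - x) * u0 y \<partial>lborel)"
    using False by (simp add: levy_semigroup_def)
  also have "\<dots> = \<bar>1\<bar> *\<^sub>R (\<integral>z. p t ((x + 1 * z) - x) * u0 (x + 1 * z) \<partial>lborel)"
    by (rule lborel_integral_real_affine) simp
  also have "\<dots> = (\<integral>z. p t z * u0 (x + z) \<partial>lborel)" by simp
  also have "\<dots> = (\<integral>\<omega>. u0 (x + X t \<omega>) \<partial>M)"
    using d pn u0_meas by (intro distributed_integral) auto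
  finally show ?thesis .
qed



lemma sym_int:
  assumes levy: "symmetric_levy_with_densities M X p" and t: "0 \<le> t"
    and g: "g \<in> borel_measurable borel"
  shows "(\<integral>\<^sup>+\<omega>. g (- X t \<omega>) \<partial>M) = (\<integral>\<^sup>+\<omega>. g (X t \<omega>) \<partial>M)"
proof -
  have [measurable]: "X t \<in> borel_measurable M" using levy_meas[OF levy t] .
  have eq: "distr M borel (\<lambda>\<omega>. - X t \<omega>) = distr M borel (X t)"
    using levy t by (simp add: symmetric_levy_with_densities_def)
  have "(\<integral>\<^sup>+\<omega>. g (- X t \<omega>) \<partial>M) = (\<integral>\<^sup>+y. g y \<partial>distr M borel (\<lambda>\<omega>. - X t \<omega>))"
    using g by (subst nn_integral_distr) auto
  also have "\<dots> = (\<integral>\<^sup>+y. g y \<partial>distr M borel (X t))" by (simp only: eq)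
  also have "\<dots> = (\<integral>\<^sup>+\<omega>. g (X t \<omega>) \<partial>M)"
    using g by (subst nn_integral_distr) auto
  finally show ?thesis .
qed

lemma sq_le:
  fixes a B :: real
  assumes "\<And>y. \<bar>f y\<bar> \<le> B" shows "(f y)\<^sup>2 \<le> B\<^sup>2"
proof -
  have "\<bar>f y\<bar> \<le> B" by (rule assms)
  moreover have "0 \<le> B" using assms[of y] abs_ge_zero[of "f y"] by linarith
  ultimately have "\<bar>f y\<bar> \<le> \<bar>B\<bar>" by simp
  then show ?thesis by (simp add: abs_le_square_iff)
qed

lemma K:
  assumes levy: "symmetric_levy_with_densities M X p"
    and u0_meas: "u0 \<in> borel_measurable borel"
    and u0_bdd: "bounded (range u0)"
    and wt: "weight \<theta>"
    and t: "0 \<le> t"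
    and s: "\<forall>y. \<theta> y * (u0 y)\<^sup>2 \<le> s"
  shows "ennreal (\<theta> x * (levy_semigroup p t u0 x)\<^sup>2) \<le> ennreal s * (\<integral>\<^sup>+\<omega>. ennreal (\<theta> (X t \<omega>)) \<partial>M)"
proof -
  interpret prob_space M using levy_prob[OF levy] .
  have th_meas: "\<theta> \<in> borel_measurable borel" and th_nn: "\<And>x. 0 \<le> \<theta> x"
    and th_sub: "\<And>a b. \<theta> (a + b) \<le> \<theta> a * \<theta> b"
    using wt by (auto simp: weight_def)
  have "0 \<le> \<theta> 0 * (u0 0)\<^sup>2" using th_nn[of 0] by simp
  then have s0: "0 \<le> s" using spec[OF s, of 0] by linarith
  obtain B where B: "\<And>y. \<bar>u0 y\<bar> \<le> B"
    using u0_bdd unfolding bounded_iff by (auto simp: real_norm_def)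
  define Y where "Y \<omega> = u0 (x + X t \<omega>)" for \<omega>
  have Ym[measurable]: "Y \<in> borel_measurable M" unfolding Y_def by (rule meas_comp[OF levy u0_meas t])
  have intY: "integrable M Y"
    by (rule integrable_const_bound[where B=B]) (auto simp: B Y_def)
  have intY2: "integrable M (\<lambda>\<omega>. (Y \<omega>)\<^sup>2)"
  proof (rule integrable_const_bound[where B="B\<^sup>2"])
    show "AE \<omega> in M. norm ((Y \<omega>)\<^sup>2) \<le> B\<^sup>2"
      using B unfolding Y_def by (intro AE_I2) (simp add: sq_le)
  qed simp
  have var: "(expectation Y)\<^sup>2 \<le> expectation (\<lambda>\<omega>. (Y \<omega>)\<^sup>2)"
    using variance_eq[OF intY intY2] variance_positive[of Y] by linarith
  have 1: "\<theta> x * (levy_semigroup p t u0 x)\<^sup>2 \<le> expectation (\<lambda>\<omega>. \<theta> x * (Y \<omega>)\<^sup>2)"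
    using SG[OF levy u0_meas t, of x] var th_nn[of x]
    by (simp add: Y_def[symmetric] mult_left_mono)
  have 2: "ennreal (expectation (\<lambda>\<omega>. \<theta> x * (Y \<omega>)\<^sup>2)) = (\<integral>\<^sup>+\<omega>. ennreal (\<theta> x * (Y \<omega>)\<^sup>2) \<partial>M)"
    using intY2 th_nn[of x] by (subst nn_integral_eq_integral) auto
  have pw: "\<theta> x * (u0 (x + z))\<^sup>2 \<le> s * \<theta> (- z)" for z
  proof -
    have "\<theta> x \<le> \<theta> (x + z) * \<theta> (- z)" using th_sub[of "x + z" "- z"] by simp
    then have "\<theta> x * (u0 (x + z))\<^sup>2 \<le> \<theta> (x + z) * \<theta> (- z) * (u0 (x + z))\<^sup>2"
      by (rule mult_right_mono) simp
    also have "\<dots> = \<theta> (- z) * (\<theta> (x + z) * (u0 (x + z))\<^sup>2)" by (simp only: ac_simps)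
    also have "\<dots> \<le> \<theta> (- z) * s" using s th_nn by (intro mult_left_mono) auto
    finally show ?thesis by (simp add: mult.commute)
  qed
  have 3: "(\<integral>\<^sup>+\<omega>. ennreal (\<theta> x * (Y \<omega>)\<^sup>2) \<partial>M) \<le> (\<integral>\<^sup>+\<omega>. ennreal s * ennreal (\<theta> (- X t \<omega>)) \<partial>M)"
    using pw s0 th_nn by (intro nn_integral_mono) (auto simp: Y_def ennreal_mult[symmetric])
  have [measurable]: "X t \<in> borel_measurable M" using levy_meas[OF levy t] .
  have th_meas'[measurable]: "\<theta> \<in> borel_measurable borel" by (rule th_meas)
  have 4: "(\<integral>\<^sup>+\<omega>. ennreal s * ennreal (\<theta> (- X t \<omega>)) \<partial>M) = ennreal s * (\<integral>\<^sup>+\<omega>. ennreal (\<theta> (- X t \<omega>)) \<partial>M)"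
    by (rule nn_integral_cmult) simp
  have 5: "(\<integral>\<^sup>+\<omega>. ennreal (\<theta> (- X t \<omega>)) \<partial>M) = (\<integral>\<^sup>+\<omega>. ennreal (\<theta> (X t \<omega>)) \<partial>M)"
    by (rule sym_int[OF levy t]) simp
  have "ennreal (\<theta> x * (levy_semigroup p t u0 x)\<^sup>2) \<le> ennreal (expectation (\<lambda>\<omega>. \<theta> x * (Y \<omega>)\<^sup>2))"
    using 1 by (rule ennreal_leI)
  also note 2
  also note 3
  also note 4
  finally show ?thesis using 5 by simp
qed



lemma core:
  assumes levy: "symmetric_levy_with_densities M X p"
    and u0_meas: "u0 \<in> borel_measurable borel"
    and u0_bdd: "bounded (range u0)"
    and wt: "weight \<theta>"
    and nu: "0 < \<nu>"
  shows "Nnorm M \<beta> \<nu> \<theta> (\<lambda>t x \<omega>. levy_semigroup p t u0 x)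
              \<le> Nnorm M \<beta> \<nu> \<theta> (\<lambda>t x \<omega>. u0 x) *
                 ennreal_sqrt (SUP t\<in>{0..}. ennreal (exp (- \<beta> * t)) * (\<integral>\<^sup>+\<omega>. ennreal (\<theta> (X t \<omega>)) \<partial>M))"
proof -
  interpret prob_space M using levy_prob[OF levy] .
  have th_meas[measurable]: "\<theta> \<in> borel_measurable borel" and th_nn: "\<And>x. 0 \<le> \<theta> x"
    and th_sub: "\<And>a b. \<theta> (a + b) \<le> \<theta> a * \<theta> b"
    using wt by (auto simp: weight_def)
  have LC: "\<And>c. (Lnorm M \<nu> (\<lambda>\<omega>. c))\<^sup>2 = c\<^sup>2"
    using Lnorm_const[OF prob_space_axioms nu] by simp
  define S0 where "S0 = (SUP t\<in>{0..}. SUP x. ennreal (exp (- \<beta> * t) * \<theta> x * (Lnorm M \<nu> (\<lambda>\<omega>. u0 x))\<^sup>2))"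
  define L where "L = (SUP t\<in>{0..}. SUP x. ennreal (exp (- \<beta> * t) * \<theta> x * (Lnorm M \<nu> (\<lambda>\<omega>. levy_semigroup p t u0 x))\<^sup>2))"
  define G where "G = (SUP t\<in>{0..}. ennreal (exp (- \<beta> * t)) * (\<integral>\<^sup>+\<omega>. ennreal (\<theta> (X t \<omega>)) \<partial>M))"
  have term0: "ennreal (\<theta> y * (u0 y)\<^sup>2) \<le> S0" for y
  proof -
    have "ennreal (\<theta> y * (u0 y)\<^sup>2) = ennreal (exp (- \<beta> * 0) * \<theta> y * (Lnorm M \<nu> (\<lambda>\<omega>. u0 y))\<^sup>2)"
      by (simp add: LC)
    also have "\<dots> \<le> S0" unfolding S0_def
      by (rule SUP_upper2[where i=0]) (auto intro: SUP_upper)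
    finally show ?thesis .
  qed
  have Gt: "0 \<le> t \<Longrightarrow> ennreal (exp (- \<beta> * t)) * (\<integral>\<^sup>+\<omega>. ennreal (\<theta> (X t \<omega>)) \<partial>M) \<le> G" for t
    unfolding G_def by (rule SUP_upper) simp
  have main: "ennreal (exp (- \<beta> * t) * \<theta> x * (levy_semigroup p t u0 x)\<^sup>2) \<le> S0 * G"
    if t: "0 \<le> t" for t x
  proof (cases "\<theta> 0 = 0")
    case True
    have "\<theta> x \<le> \<theta> x * \<theta> 0" using th_sub[of x 0] by simp
    then have "\<theta> x = 0" using True th_nn[of x] by simp
    then show ?thesis by simp
  next
    case False
    then have th0: "0 < \<theta> 0" using th_nn[of 0] by simp
    show ?thesis
    proof (cases "S0 = top")
      case True
      have "(\<integral>\<^sup>+\<omega>. ennreal (\<theta> (X 0 \<omega>)) \<partial>M) = (\<integral>\<^sup>+\<omega>. ennreal (\<theta> 0) \<partial>M)"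
        using levy_X0[OF levy] by (intro nn_integral_cong_AE) auto
      also have "\<dots> = ennreal (\<theta> 0)" by (simp add: emeasure_space_1)
      finally have "ennreal (\<theta> 0) \<le> G" using Gt[of 0] by simp
      then have "G \<noteq> 0" using th0 by (metis ennreal_eq_0_iff le_zero_eq not_le)
      then have "S0 * G = top" using True by (simp add: ennreal_top_mult)
      then show ?thesis by simp
    next
      case False
      define s where "s = enn2real S0"
      have S0s: "S0 = ennreal s" using False by (simp add: s_def less_top)
      have s0: "0 \<le> s" by (simp add: s_def)
      have sb: "\<forall>y. \<theta> y * (u0 y)\<^sup>2 \<le> s"
        using term0 s0 by (simp add: S0s ennreal_le_iff)
      have "ennreal (exp (- \<beta> * t) * \<theta> x * (levy_semigroup p t u0 x)\<^sup>2)
          = ennreal (exp (- \<beta> * t)) * ennreal (\<theta> x * (levy_semigroup p t u0 x)\<^sup>2)"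
        using th_nn[of x] by (simp add: ennreal_mult mult.assoc)
      also have "\<dots> \<le> ennreal (exp (- \<beta> * t)) * (ennreal s * (\<integral>\<^sup>+\<omega>. ennreal (\<theta> (X t \<omega>)) \<partial>M))"
        by (intro mult_left_mono K[OF levy u0_meas u0_bdd wt t sb]) simp
      also have "\<dots> = ennreal s * (ennreal (exp (- \<beta> * t)) * (\<integral>\<^sup>+\<omega>. ennreal (\<theta> (X t \<omega>)) \<partial>M))"
        by (simp add: mult.left_commute)
      also have "\<dots> \<le> S0 * G" unfolding S0s by (intro mult_left_mono Gt t) simp
      finally show ?thesis .
    qed
  qed
  have "L \<le> S0 * G" unfolding L_def
    using main by (intro SUP_least) (auto simp: LC)
  then have "ennreal_sqrt L \<le> ennreal_sqrt S0 * ennreal_sqrt G"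
    using ennreal_sqrt_mono ennreal_sqrt_mult by metis
  then show ?thesis unfolding Nnorm_def L_def S0_def G_def .
qed



lemma gmult:
  assumes levy: "symmetric_levy_with_densities M X p" and s: "0 \<le> s" and t: "0 \<le> t"
  shows "(\<integral>\<^sup>+\<omega>. ennreal (exp (c * X (s + t) \<omega>)) \<partial>M)
       = (\<integral>\<^sup>+\<omega>. ennreal (exp (c * X s \<omega>)) \<partial>M) * (\<integral>\<^sup>+\<omega>. ennreal (exp (c * X t \<omega>)) \<partial>M)"
proof -
  interpret prob_space M using levy_prob[OF levy] .
  have L: "levy_process M X" using levy by (simp add: symmetric_levy_with_densities_def)
  define ts where "ts = [0, s, s + t]"
  have ind: "indep_vars (\<lambda>_. borel) (\<lambda>i \<omega>. X (ts ! Suc i) \<omega> - X (ts ! i) \<omega>) {..<2}"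
    using L s t unfolding levy_process_def ts_def
    by (elim conjE) (drule spec[of _ "[0, s, s + t]"], drule spec[of _ 2], auto)
  define F where "F = (\<lambda>(i::nat) (r::real). ennreal (exp (c * r)))"
  have ind2: "indep_vars (\<lambda>_. borel) (\<lambda>i \<omega>. F i (X (ts ! Suc i) \<omega> - X (ts ! i) \<omega>)) {..<2}"
    by (rule indep_vars_compose2[OF ind]) (simp add: F_def)
  have mX[measurable]: "\<And>u. 0 \<le> u \<Longrightarrow> X u \<in> borel_measurable M" using levy_meas[OF levy] .
  have [measurable]: "X 0 \<in> borel_measurable M" "X s \<in> borel_measurable M" "X t \<in> borel_measurable M"
    "X (s + t) \<in> borel_measurable M" using s t by (auto intro: mX)
  have prodeq: "(\<integral>\<^sup>+\<omega>. (\<Prod>i\<in>{..<2}. F i (X (ts ! Suc i) \<omega> - X (ts ! i) \<omega>)) \<partial>M)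
      = (\<Prod>i\<in>{..<2}. \<integral>\<^sup>+\<omega>. F i (X (ts ! Suc i) \<omega> - X (ts ! i) \<omega>) \<partial>M)"
    by (rule indep_vars_nn_integral[OF _ ind2]) auto
  have X0: "AE \<omega> in M. X 0 \<omega> = 0" using levy_X0[OF levy] .
  have lhs: "(\<integral>\<^sup>+\<omega>. (\<Prod>i\<in>{..<2}. F i (X (ts ! Suc i) \<omega> - X (ts ! i) \<omega>)) \<partial>M)
      = (\<integral>\<^sup>+\<omega>. ennreal (exp (c * X (s + t) \<omega>)) \<partial>M)"
  proof (rule nn_integral_cong_AE)
    show "AE \<omega> in M. (\<Prod>i\<in>{..<2}. F i (X (ts ! Suc i) \<omega> - X (ts ! i) \<omega>)) = ennreal (exp (c * X (s + t) \<omega>))"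
      using X0
    proof (rule AE_mp, intro AE_I2 impI)
      fix \<omega> assume "X 0 \<omega> = 0"
      then show "(\<Prod>i\<in>{..<2}. F i (X (ts ! Suc i) \<omega> - X (ts ! i) \<omega>)) = ennreal (exp (c * X (s + t) \<omega>))"
        by (simp add: F_def ts_def numeral_2_eq_2 lessThan_Suc ennreal_mult[symmetric]
            exp_add[symmetric] algebra_simps)
    qed
  qed
  have f0: "(\<integral>\<^sup>+\<omega>. F 0 (X (ts ! Suc 0) \<omega> - X (ts ! 0) \<omega>) \<partial>M) = (\<integral>\<^sup>+\<omega>. ennreal (exp (c * X s \<omega>)) \<partial>M)"
    using X0 by (intro nn_integral_cong_AE) (auto simp: F_def ts_def)
  have stat: "distr M borel (\<lambda>\<omega>. X (s + t) \<omega> - X s \<omega>) = distr M borel (X t)"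
    using L s t unfolding levy_process_def by blast
  have "(\<integral>\<^sup>+\<omega>. F 1 (X (ts ! Suc 1) \<omega> - X (ts ! 1) \<omega>) \<partial>M)
      = (\<integral>\<^sup>+\<omega>. ennreal (exp (c * (X (s + t) \<omega> - X s \<omega>))) \<partial>M)"
    by (simp add: F_def ts_def)
  also have "\<dots> = (\<integral>\<^sup>+r. ennreal (exp (c * r)) \<partial>distr M borel (\<lambda>\<omega>. X (s + t) \<omega> - X s \<omega>))"
    by (subst nn_integral_distr) auto
  also have "\<dots> = (\<integral>\<^sup>+r. ennreal (exp (c * r)) \<partial>distr M borel (X t))" by (simp only: stat)
  also have "\<dots> = (\<integral>\<^sup>+\<omega>. ennreal (exp (c * X t \<omega>)) \<partial>M)"
    by (subst nn_integral_distr) auto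
  finally have f1: "(\<integral>\<^sup>+\<omega>. F 1 (X (ts ! Suc 1) \<omega> - X (ts ! 1) \<omega>) \<partial>M) = (\<integral>\<^sup>+\<omega>. ennreal (exp (c * X t \<omega>)) \<partial>M)" .
  have "(\<Prod>i\<in>{..<2::nat}. \<integral>\<^sup>+\<omega>. F i (X (ts ! Suc i) \<omega> - X (ts ! i) \<omega>) \<partial>M)
     = (\<integral>\<^sup>+\<omega>. F 0 (X (ts ! Suc 0) \<omega> - X (ts ! 0) \<omega>) \<partial>M) * (\<integral>\<^sup>+\<omega>. F 1 (X (ts ! Suc 1) \<omega> - X (ts ! 1) \<omega>) \<partial>M)"
    by (simp add: numeral_2_eq_2 lessThan_Suc mult.commute)
  then show ?thesis using prodeq lhs f0 f1 by simp
qed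



lemma gpow:
  assumes levy: "symmetric_levy_with_densities M X p" and a: "0 \<le> a"
  shows "(\<integral>\<^sup>+\<omega>. ennreal (exp (c * X (real n * a) \<omega>)) \<partial>M) = (\<integral>\<^sup>+\<omega>. ennreal (exp (c * X a \<omega>)) \<partial>M) ^ n"
proof (induction n)
  case 0
  interpret prob_space M using levy_prob[OF levy] .
  have "(\<integral>\<^sup>+\<omega>. ennreal (exp (c * X 0 \<omega>)) \<partial>M) = (\<integral>\<^sup>+\<omega>. 1 \<partial>M)"
    using levy_X0[OF levy] by (intro nn_integral_cong_AE) auto
  then show ?case by (simp add: emeasure_space_1)
next
  case (Suc n)
  have "real (Suc n) * a = a + real n * a" by (simp add: algebra_simps)
  then show ?case using gmult[OF levy a, of "real n * a" c] Suc a by simp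
qed

lemma ennreal_pow_le_imp:
  fixes a b :: ennreal
  assumes le: "a ^ n \<le> b ^ n" and n: "0 < n"
  shows "a \<le> b"
proof (cases b)
  case (real y)
  show ?thesis
  proof (cases a)
    case (real x)
    have "ennreal (x ^ n) \<le> ennreal (y ^ n)"
      using le \<open>a = ennreal x\<close> \<open>0 \<le> x\<close> \<open>b = ennreal y\<close> \<open>0 \<le> y\<close> by (simp add: ennreal_power)
    then have "x ^ n \<le> y ^ n" using \<open>0 \<le> y\<close> by (simp add: ennreal_le_iff)
    then have "x \<le> y" using power_mono_iff[OF \<open>0 \<le> x\<close> \<open>0 \<le> y\<close> n] by blast
    then show ?thesis using \<open>a = ennreal x\<close> \<open>b = ennreal y\<close> by (simp add: ennreal_leI)
  next
    case top
    then have "a ^ n = top" using n by (simp only: power_top_ennreal)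
    then have "b ^ n = top" using le by (metis top_unique)
    then have "b = top" by (simp only: power_eq_top_ennreal)
    then show ?thesis using \<open>b = ennreal y\<close> by simp
  qed
qed simp

lemma grat:
  assumes levy: "symmetric_levy_with_densities M X p"
    and g1: "(\<integral>\<^sup>+\<omega>. ennreal (exp (c * X 1 \<omega>)) \<partial>M) \<le> ennreal (exp \<beta>)"
    and n: "0 < n"
  shows "(\<integral>\<^sup>+\<omega>. ennreal (exp (c * X (real k / real n) \<omega>)) \<partial>M) \<le> ennreal (exp (\<beta> * (real k / real n)))"
proof -
  let ?g = "\<lambda>t. (\<integral>\<^sup>+\<omega>. ennreal (exp (c * X t \<omega>)) \<partial>M)"
  have "?g (real k / real n) ^ n = ?g (real n * (real k / real n))"
    using gpow[OF levy, of "real k / real n" c n] by simp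
  also have "real n * (real k / real n) = real k * 1" using n by simp
  also have "?g (real k * 1) = ?g 1 ^ k" using gpow[OF levy, of 1 c k] by simp
  also have "\<dots> \<le> ennreal (exp \<beta>) ^ k" using g1 by (rule power_mono) simp
  also have "\<dots> = ennreal (exp (\<beta> * (real k / real n))) ^ n"
  proof -
    have "exp \<beta> ^ k = exp (real k * \<beta>)" by (simp add: exp_of_nat_mult)
    moreover have "exp (\<beta> * (real k / real n)) ^ n = exp (real n * (\<beta> * (real k / real n)))"
      by (simp only: exp_of_nat_mult)
    moreover have "real k * \<beta> = real n * (\<beta> * (real k / real n))" using n by simp
    ultimately have "exp \<beta> ^ k = exp (\<beta> * (real k / real n)) ^ n" by simp
    then show ?thesis by (simp add: ennreal_power)
  qed
  finally have le: "?g (real k / real n) ^ n \<le> ennreal (exp (\<beta> * (real k / real n))) ^ n" .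
  show ?thesis by (rule ennreal_pow_le_imp[OF le n])
qed



lemma gle:
  assumes levy: "symmetric_levy_with_densities M X p"
    and g1: "(\<integral>\<^sup>+\<omega>. ennreal (exp (c * X 1 \<omega>)) \<partial>M) \<le> ennreal (exp \<beta>)"
    and t: "0 \<le> t"
  shows "(\<integral>\<^sup>+\<omega>. ennreal (exp (c * X t \<omega>)) \<partial>M) \<le> ennreal (exp (\<beta> * t))"
proof -
  let ?g = "\<lambda>t. (\<integral>\<^sup>+\<omega>. ennreal (exp (c * X t \<omega>)) \<partial>M)"
  define k where "k j = nat (\<lfloor>real (Suc j) * t\<rfloor> + 1)" for j
  define r where "r j = real (k j) / real (Suc j)" for j
  have fl0: "0 \<le> \<lfloor>real (Suc j) * t\<rfloor>" for j using t by simp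
  have rk: "real (k j) = real_of_int \<lfloor>real (Suc j) * t\<rfloor> + 1" for j
    using fl0[of j] unfolding k_def by (simp add: of_nat_nat)
  have r_gt: "t < r j" for j
  proof -
    have "real (Suc j) * t < real (k j)" using rk[of j] by linarith
    then show ?thesis unfolding r_def by (simp add: field_simps)
  qed
  have r_le: "r j \<le> t + 1 / real (Suc j)" for j
  proof -
    have "real (k j) \<le> real (Suc j) * t + 1" using rk[of j] by linarith
    then have "r j \<le> (real (Suc j) * t + 1) / real (Suc j)" unfolding r_def
      by (intro divide_right_mono) auto
    also have "\<dots> = t + 1 / real (Suc j)" by (simp add: field_simps)
    finally show ?thesis .
  qed
  have r0: "0 \<le> r j" for j using r_gt[of j] t by simp
  have lim1: "(\<lambda>j. t + 1 / real (Suc j)) \<longlonglongrightarrow> t"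
    using tendsto_add[OF tendsto_const LIMSEQ_Suc[OF lim_1_over_n], of t] by simp
  have r_lim: "r \<longlonglongrightarrow> t"
    by (rule tendsto_sandwich[OF _ _ tendsto_const lim1]) (use r_gt r_le in \<open>auto intro!: always_eventually less_imp_le\<close>)
  have r_right: "filterlim r (at_right t) sequentially"
    by (rule tendsto_imp_filterlim_at_right[OF r_lim]) (simp add: r_gt)
  have gr: "?g (r j) \<le> ennreal (exp (\<beta> * r j))" for j
    unfolding r_def by (rule grat[OF levy g1]) simp
  have L: "levy_process M X" using levy by (simp add: symmetric_levy_with_densities_def)
  have cadlag: "AE \<omega> in M. \<forall>t\<ge>0. continuous (at_right t) (\<lambda>s. X s \<omega>)"
    using L unfolding levy_process_def by (elim conjE) (erule AE_mp, auto)
  have conv: "AE \<omega> in M. (\<lambda>j. ennreal (exp (c * X (r j) \<omega>))) \<longlonglongrightarrow> ennreal (exp (c * X t \<omega>))"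
    using cadlag
  proof (rule AE_mp, intro AE_I2 impI)
    fix \<omega> assume "\<forall>t\<ge>0. continuous (at_right t) (\<lambda>s. X s \<omega>)"
    then have "((\<lambda>s. X s \<omega>) \<longlongrightarrow> X t \<omega>) (at_right t)" using t by (simp add: continuous_within)
    from filterlim_compose[OF this r_right]
    have "(\<lambda>j. X (r j) \<omega>) \<longlonglongrightarrow> X t \<omega>" .
    then show "(\<lambda>j. ennreal (exp (c * X (r j) \<omega>))) \<longlonglongrightarrow> ennreal (exp (c * X t \<omega>))"
      by (intro tendsto_intros)
  qed
  have meas: "(\<lambda>\<omega>. ennreal (exp (c * X (r j) \<omega>))) \<in> borel_measurable M" for j
  proof -
    have [measurable]: "X (r j) \<in> borel_measurable M" using levy_meas[OF levy r0] .
    show ?thesis by measurable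
  qed
  have "?g t = (\<integral>\<^sup>+\<omega>. liminf (\<lambda>j. ennreal (exp (c * X (r j) \<omega>))) \<partial>M)"
  proof (rule nn_integral_cong_AE)
    from conv show "AE \<omega> in M. ennreal (exp (c * X t \<omega>)) = liminf (\<lambda>j. ennreal (exp (c * X (r j) \<omega>)))"
    proof eventually_elim
      case (elim \<omega>) then show ?case by (intro lim_imp_Liminf[symmetric]) simp_all
    qed
  qed
  also have "\<dots> \<le> liminf (\<lambda>j. ?g (r j))"
    by (rule nn_integral_liminf[OF meas])
  also have "\<dots> \<le> liminf (\<lambda>j. ennreal (exp (\<beta> * r j)))"
    by (intro Liminf_mono always_eventually allI gr)
  also have "\<dots> = ennreal (exp (\<beta> * t))"
    by (intro lim_imp_Liminf) (auto intro!: tendsto_intros r_lim)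
  finally show ?thesis .
qed



theorem lemma2p7:
  fixes M :: "'a measure" and X :: "real \<Rightarrow> 'a \<Rightarrow> real" and p :: "real \<Rightarrow> real \<Rightarrow> real"
    and u0 :: "real \<Rightarrow> real" and \<theta> :: "real \<Rightarrow> real"
  assumes levy: "symmetric_levy_with_densities M X p"
    and u0_meas: "u0 \<in> borel_measurable borel"
    and u0_nonneg: "\<forall>x. 0 \<le> u0 x"
    and u0_bdd: "bounded (range u0)"
    and wt: "weight \<theta>"
  shows "(\<forall>\<beta>>0. \<forall>\<nu>::nat. even \<nu> \<and> 2 \<le> \<nu> \<longrightarrow>
            Nnorm M \<beta> \<nu> \<theta> (\<lambda>t x \<omega>. levy_semigroup p t u0 x)
              \<le> Nnorm M \<beta> \<nu> \<theta> (\<lambda>t x \<omega>. u0 x) *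
                 ennreal_sqrt (SUP t\<in>{0..}. ennreal (exp (- \<beta> * t)) * (\<integral>\<^sup>+\<omega>. ennreal (\<theta> (X t \<omega>)) \<partial>M)))
       \<and> (\<forall>c::real. (\<integral>\<^sup>+\<omega>. ennreal (exp (c * X 1 \<omega>)) \<partial>M) < \<infinity> \<longrightarrow>
            (\<forall>\<beta>. \<beta> > ln (enn2real (\<integral>\<^sup>+\<omega>. ennreal (exp (c * X 1 \<omega>)) \<partial>M)) \<longrightarrow>
              (\<forall>\<nu>::nat. even \<nu> \<and> 2 \<le> \<nu> \<longrightarrow>
                 Nnorm M \<beta> \<nu> (\<lambda>x. exp (c * x)) (\<lambda>t x \<omega>. levy_semigroup p t u0 x)
                   \<le> Nnorm M \<beta> \<nu> (\<lambda>x. exp (c * x)) (\<lambda>t x \<omega>. u0 x))))"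
proof (intro conjI allI impI)
  fix \<beta> :: real and \<nu> :: nat
  assume "0 < \<beta>" "even \<nu> \<and> 2 \<le> \<nu>"
  then have "0 < \<nu>" by simp
  then show "Nnorm M \<beta> \<nu> \<theta> (\<lambda>t x \<omega>. levy_semigroup p t u0 x)
              \<le> Nnorm M \<beta> \<nu> \<theta> (\<lambda>t x \<omega>. u0 x) *
                 ennreal_sqrt (SUP t\<in>{0..}. ennreal (exp (- \<beta> * t)) * (\<integral>\<^sup>+\<omega>. ennreal (\<theta> (X t \<omega>)) \<partial>M))"
    by (rule core[OF levy u0_meas u0_bdd wt])
next
  fix c \<beta> :: real and \<nu> :: nat
  assume fin: "(\<integral>\<^sup>+\<omega>. ennreal (exp (c * X 1 \<omega>)) \<partial>M) < \<infinity>"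
    and bet: "\<beta> > ln (enn2real (\<integral>\<^sup>+\<omega>. ennreal (exp (c * X 1 \<omega>)) \<partial>M))"
    and nu: "even \<nu> \<and> 2 \<le> \<nu>"
  define m where "m = (\<integral>\<^sup>+\<omega>. ennreal (exp (c * X 1 \<omega>)) \<partial>M)"
  define rr where "rr = enn2real m"
  have mr: "m = ennreal rr" using fin unfolding rr_def m_def by (simp add: less_top)
  have rr0: "0 \<le> rr" by (simp add: rr_def)
  have "rr \<le> exp \<beta>"
  proof (cases "rr = 0")
    case False
    then have "0 < rr" using rr0 by simp
    then have "rr = exp (ln rr)" by simp
    also have "\<dots> < exp \<beta>" using bet by (simp add: rr_def m_def)
    finally show ?thesis by simp
  qed simp
  then have g1: "(\<integral>\<^sup>+\<omega>. ennreal (exp (c * X 1 \<omega>)) \<partial>M) \<le> ennreal (exp \<beta>)"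
    using mr by (simp add: m_def ennreal_leI)
  have wc: "weight (\<lambda>x. exp (c * x))"
    unfolding weight_def by (auto simp: distrib_left exp_add)
  have G1: "(SUP t\<in>{0..}. ennreal (exp (- \<beta> * t)) * (\<integral>\<^sup>+\<omega>. ennreal (exp (c * X t \<omega>)) \<partial>M)) \<le> 1"
  proof (rule SUP_least)
    fix t :: real assume "t \<in> {0..}"
    then have t: "0 \<le> t" by simp
    have "ennreal (exp (- \<beta> * t)) * (\<integral>\<^sup>+\<omega>. ennreal (exp (c * X t \<omega>)) \<partial>M)
        \<le> ennreal (exp (- \<beta> * t)) * ennreal (exp (\<beta> * t))"
      by (intro mult_left_mono gle[OF levy g1 t]) simp
    also have "\<dots> = 1" by (simp add: ennreal_mult[symmetric] exp_add[symmetric])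
    finally show "ennreal (exp (- \<beta> * t)) * (\<integral>\<^sup>+\<omega>. ennreal (exp (c * X t \<omega>)) \<partial>M) \<le> 1" .
  qed
  have "0 < \<nu>" using nu by simp
  from core[OF levy u0_meas u0_bdd wc this, of \<beta>]
  have "Nnorm M \<beta> \<nu> (\<lambda>x. exp (c * x)) (\<lambda>t x \<omega>. levy_semigroup p t u0 x)
      \<le> Nnorm M \<beta> \<nu> (\<lambda>x. exp (c * x)) (\<lambda>t x \<omega>. u0 x) *
         ennreal_sqrt (SUP t\<in>{0..}. ennreal (exp (- \<beta> * t)) * (\<integral>\<^sup>+\<omega>. ennreal (exp (c * X t \<omega>)) \<partial>M))"
    by simp
  also have "\<dots> \<le> Nnorm M \<beta> \<nu> (\<lambda>x. exp (c * x)) (\<lambda>t x \<omega>. u0 x) * 1"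
    by (intro mult_left_mono ennreal_sqrt_le1 G1) simp
  finally show "Nnorm M \<beta> \<nu> (\<lambda>x. exp (c * x)) (\<lambda>t x \<omega>. levy_semigroup p t u0 x)
                   \<le> Nnorm M \<beta> \<nu> (\<lambda>x. exp (c * x)) (\<lambda>t x \<omega>. u0 x)" by simp
qed


end
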